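(* Let $G$ be a group having a finite normal subgroup $F$ such that $G/F$ is a finitely generated abelian group. If for some prime $p$ the group $G$ is residually $\mathcal{F}_p$, then $G$ is conjugacy $\mathcal{F}_p$-separable.
   Context: $\mathcal{F}_p$ denotes the class of all finite $p$-groups. $G$ is residually $\mathcal{F}_p$ if for every non-identity $a\in G$ there is a homomorphism $\varphi$ of $G$ onto a finite $p$-group with $a\varphi\neq 1$. $G$ is conjugacy $\mathcal{F}_p$-separable if whenever $a,b\in G$ are not conjugate in $G$, there is a homomorphism $\varphi$ of $G$ onto a finite $p$-group $X$ such that $a\varphi$ and $b\varphi$ are not conjugate in $X$. *)

theory Defs
  imports "HOL-Algebra.Algebra"
begin

definition finite_p_group :: "('b, 'c) monoid_scheme \<Rightarrow> nat \<Rightarrow> bool" where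
  "finite_p_group K p \<longleftrightarrow> group K \<and> finite (carrier K) \<and> (\<exists>n. card (carrier K) = p ^ n)"

text \<open>Target groups are taken with carrier type
  'a set: every homomorphic image of G is isomorphic to a quotient G Mod N, whose
  elements are of type 'a set, so this loses no generality.\<close>
definition residually_Fp :: "('a, 'c) monoid_scheme \<Rightarrow> nat \<Rightarrow> bool" where
  "residually_Fp G p \<longleftrightarrow>
     (\<forall>a \<in> carrier G. a \<noteq> \<one>\<^bsub>G\<^esub> \<longrightarrow>
        (\<exists>(K :: 'a set monoid) \<phi>. finite_p_group K p \<and> \<phi> \<in> hom G K \<and>
            \<phi> ` carrier G = carrier K \<and> \<phi> a \<noteq> \<one>\<^bsub>K\<^esub>))"

definition conjugate_in :: "('a, 'c) monoid_scheme \<Rightarrow> 'a \<Rightarrow> 'a \<Rightarrow> bool" where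
  "conjugate_in G a b \<longleftrightarrow> (\<exists>g \<in> carrier G. b = g \<otimes>\<^bsub>G\<^esub> a \<otimes>\<^bsub>G\<^esub> inv\<^bsub>G\<^esub> g)"

definition conjugacy_Fp_separable :: "('a, 'c) monoid_scheme \<Rightarrow> nat \<Rightarrow> bool" where
  "conjugacy_Fp_separable G p \<longleftrightarrow>
     (\<forall>a \<in> carrier G. \<forall>b \<in> carrier G. \<not> conjugate_in G a b \<longrightarrow>
        (\<exists>(K :: 'a set monoid) \<phi>. finite_p_group K p \<and> \<phi> \<in> hom G K \<and>
            \<phi> ` carrier G = carrier K \<and> \<not> conjugate_in K (\<phi> a) (\<phi> b)))"

definition finitely_generated_group :: "('b, 'c) monoid_scheme \<Rightarrow> bool" where
  "finitely_generated_group H \<longleftrightarrow>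
     (\<exists>S. finite S \<and> S \<subseteq> carrier H \<and> generate H S = carrier H)"

end

theory Submission
  imports Defs "HOL-Computational_Algebra.Primes"
begin

lemma kernel_pgroup:
  assumes G: "group G" and H: "group H" and h: "h \<in> hom G H"
    and fin: "finite (carrier H)" and cH: "card (carrier H) = p ^ n"
    and p: "Factorial_Ring.prime p"
  shows "finite_p_group (G Mod kernel G H h) p" "kernel G H h \<lhd> G"
proof -
  interpret gh: group_hom G H h using G H h by (simp add: group_hom_def group_hom_axioms_def)
  show nk: "kernel G H h \<lhd> G" by (rule gh.normal_kernel)
  let ?I = "h ` carrier G"
  let ?H' = "H\<lparr>carrier := ?I\<rparr>"
  have sub: "subgroup ?I H" by (rule gh.img_is_subgroup)
  have grp': "group ?H'" using sub by (rule subgroup.subgroup_is_group) (rule H)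
  have h': "h \<in> hom G ?H'" using h by (auto simp: hom_def)
  interpret gh': group_hom G ?H' h using G grp' h' by (simp add: group_hom_def group_hom_axioms_def)
  have keq: "kernel G ?H' h = kernel G H h" by (simp add: kernel_def)
  have "(\<lambda>Y. the_elem (h`Y)) \<in> iso (G Mod (kernel G ?H' h)) ?H'"
    by (rule gh'.FactGroup_iso_set) simp
  then have bij: "bij_betw (\<lambda>Y. the_elem (h`Y)) (carrier (G Mod kernel G H h)) ?I"
    by (simp add: iso_def keq)
  have finI: "finite ?I" using fin by (meson finite_subset image_subset_iff gh.hom_closed)
  have finQ: "finite (carrier (G Mod kernel G H h))" using bij finI bij_betw_finite by blast
  have cQ: "card (carrier (G Mod kernel G H h)) = card ?I" using bij bij_betw_same_card by blast
  have "card (rcosets\<^bsub>H\<^esub> ?I) * card ?I = order H" using group.lagrange[OF H sub] .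
  then have "card ?I dvd p ^ n" using cH by (metis dvd_triv_right order_def)
  then obtain i where "card ?I = p ^ i" using divides_primepow_nat[OF p] by blast
  moreover have "group (G Mod kernel G H h)" using nk by (rule normal.factorgroup_is_group)
  ultimately show "finite_p_group (G Mod kernel G H h) p"
    unfolding finite_p_group_def using finQ cQ by auto
qed

lemma kernel_pgroup_onto:
  assumes G: "group G" and K: "finite_p_group K p" and h: "h \<in> hom G K"
    and p: "Factorial_Ring.prime p"
  shows "finite_p_group (G Mod kernel G K h) p" "kernel G K h \<lhd> G"
  using kernel_pgroup[OF G _ h _ _ p] K unfolding finite_p_group_def by blast+

lemma inter_pgroup:
  assumes G: "group G" and M: "M \<lhd> G" and N: "N \<lhd> G"
    and pM: "finite_p_group (G Mod M) p" and pN: "finite_p_group (G Mod N) p"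
    and p: "Factorial_Ring.prime p"
  shows "finite_p_group (G Mod (M \<inter> N)) p \<and> M \<inter> N \<lhd> G"
proof -
  interpret gG: group G by (rule G)
  let ?H = "(G Mod M) \<times>\<times> (G Mod N)"
  let ?h = "\<lambda>x. (M #>\<^bsub>G\<^esub> x, N #>\<^bsub>G\<^esub> x)"
  have gM: "group (G Mod M)" using M by (rule normal.factorgroup_is_group)
  have gN: "group (G Mod N)" using N by (rule normal.factorgroup_is_group)
  have H: "group ?H" using gM gN by (rule DirProd_group)
  have h: "?h \<in> hom G ?H"
    unfolding hom_pairwise using normal.r_coset_hom_Mod[OF M] normal.r_coset_hom_Mod[OF N]
    by (simp add: comp_def)
  obtain a b where a: "card (carrier (G Mod M)) = p ^ a" and b: "card (carrier (G Mod N)) = p ^ b"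
    using pM pN unfolding finite_p_group_def by blast
  have fin: "finite (carrier ?H)" using pM pN unfolding finite_p_group_def by simp
  have cH: "card (carrier ?H) = p ^ (a + b)" using a b by (simp add: card_cartesian_product power_add)
  have sM: "subgroup M G" using M by (simp add: normal_def)
  have sN: "subgroup N G" using N by (simp add: normal_def)
  have ker: "kernel G ?H ?h = M \<inter> N"
  proof -
    have "x \<in> M" if "x \<in> carrier G" "M #>\<^bsub>G\<^esub> x = M" for x using gG.coset_join1[OF that(2,1) sM] .
    moreover have "x \<in> N" if "x \<in> carrier G" "N #>\<^bsub>G\<^esub> x = N" for x using gG.coset_join1[OF that(2,1) sN] .
    moreover have "M #>\<^bsub>G\<^esub> x = M" if "x \<in> M" for x
      using gG.coset_join2[OF subgroup.mem_carrier[OF sM that] sM that] .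
    moreover have "N #>\<^bsub>G\<^esub> x = N" if "x \<in> N" for x
      using gG.coset_join2[OF subgroup.mem_carrier[OF sN that] sN that] .
    moreover have "M \<subseteq> carrier G" "N \<subseteq> carrier G" using sM sN subgroup.subset by auto
    ultimately show ?thesis unfolding kernel_def one_DirProd one_FactGroup by blast
  qed
  show ?thesis using kernel_pgroup[OF G H h fin cH p] ker by simp
qed

lemma carrier_normal:
  assumes G: "group G" shows "carrier G \<lhd> G" "finite_p_group (G Mod carrier G) p"
proof -
  interpret gG: group G by (rule G)
  have s: "subgroup (carrier G) G" by (rule gG.subgroup_self)
  show n: "carrier G \<lhd> G"
    using gG.normalI[OF s] gG.coset_join2[OF _ s] gG.coset_join3[OF _ s] by auto
  have "carrier (G Mod carrier G) = {carrier G}"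
    using gG.coset_join2[OF _ s] by (auto simp: carrier_FactGroup)
  then show "finite_p_group (G Mod carrier G) p"
    unfolding finite_p_group_def using normal.factorgroup_is_group[OF n]
    by (auto intro: exI[of _ 0])
qed

lemma separate:
  assumes G: "group G" and R: "residually_Fp G p" and p: "Factorial_Ring.prime p"
    and T: "finite T"
  shows "T \<subseteq> carrier G - {\<one>\<^bsub>G\<^esub>} \<Longrightarrow> \<exists>M. M \<lhd> G \<and> finite_p_group (G Mod M) p \<and> M \<inter> T = {}"
  using T
proof (induction T rule: finite_induct)
  case empty
  have "carrier G \<lhd> G \<and> finite_p_group (G Mod carrier G) p \<and> carrier G \<inter> {} = {}"
    using carrier_normal[OF G] by simp
  then show ?case by (rule exI)
next
  case (insert t T)
  have "T \<subseteq> carrier G - {\<one>\<^bsub>G\<^esub>}" using insert.prems by simp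
  then obtain M where M: "M \<lhd> G" "finite_p_group (G Mod M) p" "M \<inter> T = {}"
    using insert.IH by blast
  have t: "t \<in> carrier G" "t \<noteq> \<one>\<^bsub>G\<^esub>" using insert.prems by auto
  have "\<exists>(K :: 'a set monoid) \<phi>. finite_p_group K p \<and> \<phi> \<in> hom G K \<and>
            \<phi> ` carrier G = carrier K \<and> \<phi> t \<noteq> \<one>\<^bsub>K\<^esub>"
    using R t unfolding residually_Fp_def by simp
  then obtain K :: "'a set monoid" and \<phi> where K: "finite_p_group K p" "\<phi> \<in> hom G K"
     "\<phi> t \<noteq> \<one>\<^bsub>K\<^esub>"
    by blast
  let ?N = "kernel G K \<phi>"
  note N = kernel_pgroup_onto[OF G K(1,2) p]
  have tN: "t \<notin> ?N" using K(3) by (simp add: kernel_def)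
  have I: "finite_p_group (G Mod (M \<inter> ?N)) p \<and> M \<inter> ?N \<lhd> G"
    using inter_pgroup[OF G M(1) N(2) M(2) N(1) p] .
  have "(M \<inter> ?N) \<inter> insert t T = {}" using M(3) tN by auto
  then have "M \<inter> ?N \<lhd> G \<and> finite_p_group (G Mod (M \<inter> ?N)) p \<and> (M \<inter> ?N) \<inter> insert t T = {}"
    using I by simp
  then show ?case by (rule exI)
qed

theorem proposition4:
  fixes G :: "('a, 'c) monoid_scheme" and F :: "'a set" and p :: nat
  assumes "group G"
    and "F \<lhd> G"
    and "finite F"
    and "comm_group (G Mod F)"
    and "finitely_generated_group (G Mod F)"
    and "Factorial_Ring.prime p"
    and "residually_Fp G p"
  shows "conjugacy_Fp_separable G p"
  unfolding conjugacy_Fp_separable_def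
proof (intro ballI impI)
  interpret gG: group G by (rule assms(1))
  interpret nF: normal F G by (rule assms(2))
  interpret cQ: comm_group "G Mod F" by (rule assms(4))
  fix a b assume a: "a \<in> carrier G" and b: "b \<in> carrier G" and nc: "\<not> conjugate_in G a b"
  let ?C = "{g \<otimes>\<^bsub>G\<^esub> a \<otimes>\<^bsub>G\<^esub> inv\<^bsub>G\<^esub> g | g. g \<in> carrier G}"
  have Csub: "?C \<subseteq> (\<lambda>f. f \<otimes>\<^bsub>G\<^esub> a) ` F"
  proof
    fix c assume "c \<in> ?C"
    then obtain g where g: "g \<in> carrier G" "c = g \<otimes>\<^bsub>G\<^esub> a \<otimes>\<^bsub>G\<^esub> inv\<^bsub>G\<^esub> g" by blast
    have "(F #>\<^bsub>G\<^esub> g) \<otimes>\<^bsub>G Mod F\<^esub> (F #>\<^bsub>G\<^esub> a) = (F #>\<^bsub>G\<^esub> a) \<otimes>\<^bsub>G Mod F\<^esub> (F #>\<^bsub>G\<^esub> g)"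
      using g a by (intro cQ.m_comm) (auto simp: carrier_FactGroup)
    then have "F #>\<^bsub>G\<^esub> (g \<otimes>\<^bsub>G\<^esub> a) = F #>\<^bsub>G\<^esub> (a \<otimes>\<^bsub>G\<^esub> g)"
      using g a by (simp add: nF.rcos_sum)
    then have "g \<otimes>\<^bsub>G\<^esub> a \<in> F #>\<^bsub>G\<^esub> (a \<otimes>\<^bsub>G\<^esub> g)"
      by (metis g(1) a gG.m_closed gG.rcos_self nF.subgroup_axioms)
    then have f: "g \<otimes>\<^bsub>G\<^esub> a \<otimes>\<^bsub>G\<^esub> inv\<^bsub>G\<^esub> (a \<otimes>\<^bsub>G\<^esub> g) \<in> F"
      using nF.rcos_module_imp[OF assms(1)] g a by blast
    have "c = (g \<otimes>\<^bsub>G\<^esub> a \<otimes>\<^bsub>G\<^esub> inv\<^bsub>G\<^esub> (a \<otimes>\<^bsub>G\<^esub> g)) \<otimes>\<^bsub>G\<^esub> a"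
      using g a by (simp add: gG.inv_mult_group gG.m_assoc)
    then show "c \<in> (\<lambda>f. f \<otimes>\<^bsub>G\<^esub> a) ` F" using f by blast
  qed
  have finC: "finite ?C" using Csub assms(3) finite_subset by blast
  let ?T = "(\<lambda>c. b \<otimes>\<^bsub>G\<^esub> inv\<^bsub>G\<^esub> c) ` ?C"
  have Tsub: "?T \<subseteq> carrier G - {\<one>\<^bsub>G\<^esub>}"
  proof
    fix t assume "t \<in> ?T"
    then obtain g where g: "g \<in> carrier G" "t = b \<otimes>\<^bsub>G\<^esub> inv\<^bsub>G\<^esub> (g \<otimes>\<^bsub>G\<^esub> a \<otimes>\<^bsub>G\<^esub> inv\<^bsub>G\<^esub> g)" by blast
    have "b \<noteq> g \<otimes>\<^bsub>G\<^esub> a \<otimes>\<^bsub>G\<^esub> inv\<^bsub>G\<^esub> g" using nc g unfolding conjugate_in_def by blast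
    then have "t \<noteq> \<one>\<^bsub>G\<^esub>" using g a b
      by (metis gG.inv_closed gG.m_closed gG.inv_solve_right gG.l_one)
    then show "t \<in> carrier G - {\<one>\<^bsub>G\<^esub>}" using g a b by auto
  qed
  obtain M where M: "M \<lhd> G" "finite_p_group (G Mod M) p" "M \<inter> ?T = {}"
    using separate[OF assms(1) assms(7) assms(6) _ Tsub] finC by blast
  interpret nM: normal M G by (rule M(1))
  let ?K = "G Mod M" and ?\<phi> = "\<lambda>x. M #>\<^bsub>G\<^esub> x"
  have hom: "?\<phi> \<in> hom G ?K" by (rule nM.r_coset_hom_Mod)
  have onto: "?\<phi> ` carrier G = carrier ?K" by (simp add: carrier_FactGroup)
  have "\<not> conjugate_in ?K (?\<phi> a) (?\<phi> b)"
  proof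
    assume "conjugate_in ?K (?\<phi> a) (?\<phi> b)"
    then obtain Z where Z: "Z \<in> carrier ?K"
      "M #>\<^bsub>G\<^esub> b = Z \<otimes>\<^bsub>?K\<^esub> (M #>\<^bsub>G\<^esub> a) \<otimes>\<^bsub>?K\<^esub> inv\<^bsub>?K\<^esub> Z"
      unfolding conjugate_in_def by blast
    then obtain g where g: "g \<in> carrier G" "Z = M #>\<^bsub>G\<^esub> g" by (auto simp: carrier_FactGroup)
    have "inv\<^bsub>?K\<^esub> Z = M #>\<^bsub>G\<^esub> inv\<^bsub>G\<^esub> g" using Z(1) g nM.inv_FactGroup nM.rcos_inv by simp
    then have eq: "M #>\<^bsub>G\<^esub> b = M #>\<^bsub>G\<^esub> (g \<otimes>\<^bsub>G\<^esub> a \<otimes>\<^bsub>G\<^esub> inv\<^bsub>G\<^esub> g)"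
      using Z(2) g a by (simp add: nM.rcos_sum)
    let ?c = "g \<otimes>\<^bsub>G\<^esub> a \<otimes>\<^bsub>G\<^esub> inv\<^bsub>G\<^esub> g"
    have "b \<in> M #>\<^bsub>G\<^esub> ?c" using eq gG.rcos_self[OF b nM.subgroup_axioms] by simp
    then have "b \<otimes>\<^bsub>G\<^esub> inv\<^bsub>G\<^esub> ?c \<in> M"
      using nM.rcos_module_imp[OF assms(1)] g a by blast
    moreover have "b \<otimes>\<^bsub>G\<^esub> inv\<^bsub>G\<^esub> ?c \<in> ?T" using g by blast
    ultimately show False using M(3) by blast
  qed
  then show "\<exists>(K :: 'a set monoid) \<phi>. finite_p_group K p \<and> \<phi> \<in> hom G K \<and>
            \<phi> ` carrier G = carrier K \<and> \<not> conjugate_in K (\<phi> a) (\<phi> b)"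
    using M(2) hom onto by blast
qed

end
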